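(* $\mathrm{PBTD}(\Pi^\infty)=2$, and for every $m\ge1$, $\mathrm{PBTD}(\Pi^1_{\infty,m})=\Theta(m)$ (as a function of $m$).
   Context: Fix a countably infinite set $X$ of variables and an alphabet $\Sigma$ (finite or countably infinite, disjoint from $X$), $z=|\Sigma|$. A pattern is a nonempty finite string over $X\cup\Sigma$; $\Pi^z$ is the class of all patterns over an alphabet of size $z$ ($\Pi^\infty$: over a countably infinite alphabet). $\Pi^z_{\infty,m}$ is the class of patterns in $\Pi^z$ in which every variable occurs at most $m$ times (no bound on the number of distinct variables). A substitution is a morphism $h:(X\cup\Sigma)^*\to\Sigma^*$ fixing letters; $L(\pi)$ (erasing pattern language) is the set of all $h(\pi)$; patterns with equal languages are identified. A labelled example is $(w,\pm)$ with $w\in\Sigma^*$; a teaching set for $\pi$ w.r.t. a class $\Pi$ is a set $T$ of labelled examples consistent with $\pi$ such that every $\tau\in\Pi$ consistent with $T$ has $L(\tau)=L(\pi)$. For a strict partial order $\prec$ on $\Pi$, a teaching set for $\pi$ w.r.t. $(\Pi,\prec)$ is a teaching set for $\pi$ w.r.t. $\Pi\setminus\{\pi':\pi'\prec\pi\}$; $\mathrm{PBTD}(\Pi,\prec)$ is the supremum over $\pi$ of the minimum size of such sets and $\mathrm{PBTD}(\Pi)=\inf_\prec\mathrm{PBTD}(\Pi,\prec)$. *)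

theory Defs
  imports Main "HOL-Library.Extended_Nat"
begin

text \<open>Symbols of a pattern: variables (indexed by nat, a countably infinite set X)
  and letters of the alphabet, which is the whole type 'a
  (Sigma = UNIV :: 'a set; 'a = nat gives a countably infinite alphabet,
  'a = unit gives an alphabet of size 1).\<close>
datatype 'a psym = Var nat | Let 'a

type_synonym 'a pattern = "'a psym list"

definition subst :: "(nat \<Rightarrow> 'a list) \<Rightarrow> 'a pattern \<Rightarrow> 'a list" where
  "subst h p = concat (map (\<lambda>s. case s of Var x \<Rightarrow> h x | Let a \<Rightarrow> [a]) p)"

definition patlang :: "'a pattern \<Rightarrow> 'a list set" where
  "patlang p = {subst h p | h. True}"

definition all_patterns :: "'a pattern set" where
  "all_patterns = {p. p \<noteq> []}"

definition patterns_bounded_occ :: "nat \<Rightarrow> 'a pattern set" where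
  "patterns_bounded_occ m =
     {p. p \<noteq> [] \<and> (\<forall>x. length (filter (\<lambda>s. s = Var x) p) \<le> m)}"

definition consistent :: "'a list set \<Rightarrow> ('a list \<times> bool) set \<Rightarrow> bool" where
  "consistent L T \<longleftrightarrow> (\<forall>(w, b) \<in> T. (w \<in> L) = b)"

definition teaching_set :: "'a list set set \<Rightarrow> 'a list set \<Rightarrow> ('a list \<times> bool) set \<Rightarrow> bool" where
  "teaching_set C L T \<longleftrightarrow> consistent L T \<and> (\<forall>L' \<in> C. consistent L' T \<longrightarrow> L' = L)"

definition strict_po_on :: "'b set \<Rightarrow> ('b \<Rightarrow> 'b \<Rightarrow> bool) \<Rightarrow> bool" where
  "strict_po_on C R \<longleftrightarrow> (\<forall>x\<in>C. \<not> R x x) \<and>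
     (\<forall>x\<in>C. \<forall>y\<in>C. \<forall>z\<in>C. R x y \<longrightarrow> R y z \<longrightarrow> R x z)"

text \<open>Minimum size of a teaching set for L w.r.t. (C, R) (infinity if none exists).\<close>
definition pref_td :: "'a list set set \<Rightarrow> ('a list set \<Rightarrow> 'a list set \<Rightarrow> bool) \<Rightarrow> 'a list set \<Rightarrow> enat" where
  "pref_td C R L = Inf {enat (card T) | T. finite T \<and> teaching_set (C - {L'. R L' L}) L T}"

definition PBTD_order :: "'a list set set \<Rightarrow> ('a list set \<Rightarrow> 'a list set \<Rightarrow> bool) \<Rightarrow> enat" where
  "PBTD_order C R = Sup (pref_td C R ` C)"

definition PBTD :: "'a list set set \<Rightarrow> enat" where
  "PBTD C = Inf {PBTD_order C R | R. strict_po_on C R}"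

definition lang_class :: "'a pattern set \<Rightarrow> 'a list set set" where
  "lang_class P = patlang ` P"

end

theory Submission
  imports Defs
begin


lemma ts_below:
  "teaching_set (C - {L'. R L' L}) L T \<Longrightarrow> L' \<in> C \<Longrightarrow> consistent L' T \<Longrightarrow> L' \<noteq> L \<Longrightarrow> R L' L"
  by (auto simp: teaching_set_def)

lemma pref_td_le:
  "teaching_set (C - {L'. R L' L}) L T \<Longrightarrow> finite T \<Longrightarrow> pref_td C R L \<le> enat (card T)"
  unfolding pref_td_def by (rule Inf_lower) blast

lemma PBTD_le:
  assumes "strict_po_on C R" "\<And>L. L \<in> C \<Longrightarrow> pref_td C R L \<le> k"
  shows "PBTD C \<le> k"
proof -
  have "PBTD_order C R \<le> k" unfolding PBTD_order_def using assms(2) by (auto intro: SUP_least)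
  moreover have "PBTD C \<le> PBTD_order C R" unfolding PBTD_def by (intro Inf_lower) (use assms(1) in blast)
  ultimately show ?thesis by simp
qed

lemma PBTD_ge:
  assumes "\<And>R. strict_po_on C R \<Longrightarrow> k \<le> PBTD_order C R"
  shows "k \<le> PBTD C"
  unfolding PBTD_def using assms by (auto intro: Inf_greatest)

lemma small_T:
  assumes "pref_td C R L < 2"
  shows "\<exists>T. teaching_set (C - {L'. R L' L}) L T \<and> (T = {} \<or> (\<exists>w b. T = {(w,b)}))"
proof -
  from assms obtain x where x: "x \<in> {enat (card T) | T. finite T \<and> teaching_set (C - {L'. R L' L}) L T}" "x < 2"
    unfolding pref_td_def Inf_less_iff by blast
  then obtain T where T: "finite T" "teaching_set (C - {L'. R L' L}) L T" "card T < 2"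
    by (auto simp: numeral_eq_enat)
  have "T = {} \<or> (\<exists>w b. T = {(w,b)})"
  proof (cases "card T = 0")
    case True thus ?thesis using T by auto
  next
    case False then have "card T = 1" using T by linarith
    then obtain a where "T = {a}" by (auto simp: card_Suc_eq)
    thus ?thesis by (cases a) auto
  qed
  thus ?thesis using T by blast
qed

lemma minimal_exists:
  assumes "strict_po_on C R" "F \<subseteq> C" "finite F" "F \<noteq> {}"
  shows "\<exists>L\<in>F. \<forall>L'\<in>F. \<not> R L' L"
  using assms(3,4,2)
proof (induction F rule: finite_ne_induct)
  case (singleton x) thus ?case using assms(1) by (auto simp: strict_po_on_def)
next
  case (insert x F)
  then obtain m where m: "m \<in> F" "\<forall>L'\<in>F. \<not> R L' m" by auto
  show ?case
  proof (cases "R x m")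
    case True
    have "\<forall>L'\<in>insert x F. \<not> R L' x"
    proof
      fix L' assume L': "L' \<in> insert x F"
      show "\<not> R L' x"
      proof
        assume "R L' x"
        moreover have "L' \<in> C" "x \<in> C" "m \<in> C" using L' m insert.prems by auto
        ultimately have "R L' m" using True assms(1) unfolding strict_po_on_def by blast
        then show False using m L' \<open>R L' x\<close> assms(1) \<open>x \<in> C\<close>
          unfolding strict_po_on_def by auto
      qed
    qed
    thus ?thesis by blast
  next
    case False thus ?thesis using m by auto
  qed
qed

lemma lower_family:
  assumes po: "strict_po_on C R" and FC: "F \<subseteq> C" and fin: "finite F" "F \<noteq> {}"
    and nb: "\<And>L. L \<in> F \<Longrightarrow> \<exists>W. finite W \<and> card W \<ge> k \<and>
          (\<forall>w\<in>W. \<exists>L'\<in>F. L' \<noteq> L \<and> (\<forall>v. v \<noteq> w \<longrightarrow> (v \<in> L') = (v \<in> L)))"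
  shows "enat k \<le> PBTD_order C R"
proof -
  obtain L where L: "L \<in> F" "\<forall>L'\<in>F. \<not> R L' L" using minimal_exists[OF po FC fin] by blast
  obtain W where W: "finite W" "card W \<ge> k"
    "\<forall>w\<in>W. \<exists>L'\<in>F. L' \<noteq> L \<and> (\<forall>v. v \<noteq> w \<longrightarrow> (v \<in> L') = (v \<in> L))"
    using nb[OF L(1)] by blast
  have "enat k \<le> pref_td C R L"
    unfolding pref_td_def
  proof (rule Inf_greatest, clarify)
    fix T assume T: "finite T" "teaching_set (C - {L'. R L' L}) L T"
    have sub: "(\<lambda>w. (w, w \<in> L)) ` W \<subseteq> T"
    proof clarify
      fix w assume w: "w \<in> W"
      then obtain L' where L': "L' \<in> F" "L' \<noteq> L" "\<forall>v. v \<noteq> w \<longrightarrow> (v \<in> L') = (v \<in> L)" using W by blast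
      have "\<not> consistent L' T"
      proof
        assume "consistent L' T"
        then have "R L' L" using ts_below[of C R L T, OF T(2)] L' FC by auto
        thus False using L L' by auto
      qed
      then obtain v b where vb: "(v,b) \<in> T" "(v \<in> L') \<noteq> b" unfolding consistent_def by auto
      have "(v \<in> L) = b" using T(2) vb(1) unfolding teaching_set_def consistent_def by auto
      then have "v = w" using vb L'(3) by auto
      thus "(w, w \<in> L) \<in> T" using vb \<open>(v \<in> L) = b\<close> by auto
    qed
    have "card W = card ((\<lambda>w. (w, w \<in> L)) ` W)" by (rule card_image[symmetric]) (auto simp: inj_on_def)
    also have "\<dots> \<le> card T" using sub T(1) by (rule card_mono[rotated])
    finally show "enat k \<le> enat (card T)" using W by simp
  qed
  also have "\<dots> \<le> PBTD_order C R" unfolding PBTD_order_def using L FC by (auto intro: SUP_upper)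
  finally show ?thesis .
qed



abbreviation CI :: "nat list set set" where "CI \<equiv> lang_class (all_patterns :: nat pattern set)"

lemma subst_simps[simp]:
  "subst h [] = []" "subst h (Var x # p) = h x @ subst h p" "subst h (Let a # p) = a # subst h p"
  "subst h (p @ q) = subst h p @ subst h q"
  by (auto simp: subst_def)

lemma subst_lets[simp]: "subst h (map Let u) = u"
  by (induction u) auto

lemma lang_var: "patlang [Var 0] = UNIV"
  unfolding patlang_def by (auto intro!: exI[of _ "\<lambda>_. _"])

lemma lang_lets: "patlang (map Let u) = {u}"
  unfolding patlang_def by auto

lemma lang_sq: "patlang [Var 0, Var 0] = {u @ u | u. True}"
  by (auto simp: patlang_def)

lemma in_CI: "p \<noteq> [] \<Longrightarrow> patlang p \<in> CI"
  by (auto simp: lang_class_def all_patterns_def)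

lemma letter_in: "Let a \<in> set p \<Longrightarrow> a \<in> set (subst g p)"
proof (induction p)
  case (Cons s p) thus ?case by (cases s) auto
qed simp

lemma set_subst: "b \<in> set (subst h p) \<Longrightarrow> Let b \<in> set p \<or> (\<exists>x. Var x \<in> set p \<and> b \<in> set (h x))"
proof (induction p)
  case (Cons s p) thus ?case by (cases s) auto
qed simp

lemma subst_comp:
  "(\<forall>a. Let a \<in> set q \<longrightarrow> \<phi> a = [a]) \<Longrightarrow>
    concat (map \<phi> (subst g q)) = subst (\<lambda>x. concat (map \<phi> (g x))) q"
proof (induction q)
  case Nil thus ?case by simp
next
  case (Cons s q) thus ?case by (cases s) auto
qed

lemma upper_inf: "PBTD CI \<le> 2"
proof (rule PBTD_le[where R = "\<lambda>L' L. L \<subset> L'"])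
  show "strict_po_on CI (\<lambda>L' L. L \<subset> L')" unfolding strict_po_on_def by auto
next
  fix L assume "L \<in> CI"
  then obtain p where p: "p \<noteq> []" "L = patlang p" by (auto simp: lang_class_def all_patterns_def)
  define N where "N = Suc (Max (insert 0 {a. Let a \<in> set p}))"
  have finl: "finite {a. Let a \<in> set p}"
    by (rule finite_subset[of _ "(\<lambda>s. case s of Let a \<Rightarrow> a | Var x \<Rightarrow> 0) ` set p"]) force+
  have ltN: "a < N" if "Let a \<in> set p" for a
    using that finl unfolding N_def by (simp add: le_imp_less_Suc)
  define h1 where "h1 = (\<lambda>x::nat. [N + 2*x])"
  define h2 where "h2 = (\<lambda>x::nat. [N + 2*x + 1])"
  define w1 where "w1 = subst h1 p"
  define w2 where "w2 = subst h2 p"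
  define T where "T = {(w1,True),(w2,True)}"
  have cardT: "card T \<le> 2" unfolding T_def by (simp add: card_insert_le_m1)
  have w1L: "w1 \<in> L" and w2L: "w2 \<in> L" unfolding p w1_def w2_def patlang_def by auto
  have ts: "teaching_set (CI - {L'. L \<subset> L'}) L T"
    unfolding teaching_set_def
  proof (intro conjI ballI impI)
    show "consistent L T" using w1L w2L by (auto simp: T_def consistent_def)
  next
    fix L' assume L': "L' \<in> CI - {L'. L \<subset> L'}" and c: "consistent L' T"
    then obtain q where q: "L' = patlang q" by (auto simp: lang_class_def)
    have "w1 \<in> L'" "w2 \<in> L'" using c by (auto simp: T_def consistent_def)
    then obtain g where g: "w1 = subst g q" using q by (auto simp: patlang_def)
    have qlet: "a < N" if "Let a \<in> set q" for a
    proof -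
      have a1: "a \<in> set w1" using that g letter_in by metis
      obtain g2 where "w2 = subst g2 q" using \<open>w2 \<in> L'\<close> q by (auto simp: patlang_def)
      then have a2: "a \<in> set w2" using that letter_in by metis
      show ?thesis
      proof (rule ccontr)
        assume "\<not> a < N"
        from a1 obtain x where x: "a = N + 2*x" using set_subst[of a h1 p] ltN \<open>\<not> a < N\<close>
          unfolding w1_def h1_def by auto
        from a2 obtain y where y: "a = N + 2*y + 1" using set_subst[of a h2 p] ltN \<open>\<not> a < N\<close>
          unfolding w2_def h2_def by auto
        from x y show False by presburger
      qed
    qed
    have "patlang p \<subseteq> L'"
    proof
      fix w assume "w \<in> patlang p"
      then obtain h where h: "w = subst h p" by (auto simp: patlang_def)
      define \<phi> where "\<phi> = (\<lambda>b. if N \<le> b \<and> even (b - N) then h ((b - N) div 2) else [b])"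
      have "concat (map \<phi> w1) = subst (\<lambda>x. concat (map \<phi> (h1 x))) p"
        unfolding w1_def by (rule subst_comp) (auto simp: \<phi>_def dest: ltN)
      also have "(\<lambda>x. concat (map \<phi> (h1 x))) = h" by (auto simp: \<phi>_def h1_def)
      finally have 1: "concat (map \<phi> w1) = w" using h by simp
      have "concat (map \<phi> w1) = subst (\<lambda>x. concat (map \<phi> (g x))) q"
        unfolding g by (rule subst_comp) (auto simp: \<phi>_def dest: qlet)
      thus "w \<in> L'" using 1 q by (auto simp: patlang_def)
    qed
    thus "L' = L" using L' p by auto
  qed
  have "pref_td CI (\<lambda>L' L. L \<subset> L') L \<le> enat (card T)"
    by (rule pref_td_le) (use ts in \<open>auto simp: T_def\<close>)
  thus "pref_td CI (\<lambda>L' L. L \<subset> L') L \<le> 2"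
    using cardT by (auto simp: numeral_eq_enat intro: order_trans)
qed



lemma cycle: "strict_po_on C R \<Longrightarrow> a \<in> C \<Longrightarrow> b \<in> C \<Longrightarrow> R a b \<Longrightarrow> R b a \<Longrightarrow> False"
  unfolding strict_po_on_def by blast

lemma lower_inf_order:
  assumes po: "strict_po_on CI R"
  shows "2 \<le> PBTD_order CI R"
proof (rule ccontr)
  assume "\<not> 2 \<le> PBTD_order CI R"
  then have lt: "pref_td CI R L < 2" if "L \<in> CI" for L
    using that unfolding PBTD_order_def by (meson SUP_upper le_less_trans not_le)
  have TS: "\<exists>T. teaching_set (CI - {L'. R L' L}) L T \<and> (T = {} \<or> (\<exists>w b. T = {(w,b)}))"
    if "L \<in> CI" for L using small_T[OF lt[OF that]] .
  have below: "R L' L" if "teaching_set (CI - {L'. R L' L}) L T" "L' \<in> CI" "consistent L' T" "L' \<noteq> L"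
    for L L' T using ts_below[of CI R L T, OF that] .
  have tsc: "consistent L T" if "teaching_set D L T" for D L T using that by (simp add: teaching_set_def)
  define S where "S = (patlang [Var (0::nat)] :: nat list set)"
  define Q where "Q = (patlang [Var (0::nat), Var 0] :: nat list set)"
  define sg where "sg = (\<lambda>u::nat list. (patlang (map Let u) :: nat list set))"
  have S: "S = UNIV" unfolding S_def by (rule lang_var)
  have Q: "Q = {u @ u | u. True}" unfolding Q_def by (rule lang_sq)
  have sg: "sg u = {u}" for u unfolding sg_def by (rule lang_lets)
  have SC: "S \<in> CI" and QC: "Q \<in> CI" unfolding S_def Q_def by (auto intro: in_CI)
  have sgC: "u \<noteq> [] \<Longrightarrow> sg u \<in> CI" for u unfolding sg_def by (auto intro: in_CI)
  have nilQ: "[] \<in> Q" using Q by auto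
  have SQ: "S \<noteq> Q"
  proof
    assume "S = Q" then have "[0] \<in> Q" using S by auto
    then obtain u where "[0::nat] = u @ u" using Q by auto
    then show False by (cases u) auto
  qed
  have sgS: "sg u \<noteq> S" for u using S sg by (metis insert_not_empty UNIV_I singleton_iff list.distinct(1))
  have sgQ: "u \<noteq> [] \<Longrightarrow> sg u \<noteq> Q" for u using nilQ sg by auto
  define sq where "sq = (\<lambda>k::nat. [k,k])"
  have sqQ: "sq k \<in> Q" for k using Q by (auto simp: sq_def intro: exI[of _ "[k]"])
  have sqC: "sg (sq k) \<in> CI" for k by (rule sgC) (simp add: sq_def)
  have good: "\<exists>k. sq k \<notin> E \<and> R S (sg (sq k)) \<and> R Q (sg (sq k))" if finE: "finite E" for E
  proof (rule ccontr)
    assume ng: "\<not> ?thesis"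
    define K where "K = {k. sq k \<notin> E}"
    have "K = UNIV - {k. sq k \<in> E}" unfolding K_def by auto
    moreover have "finite {k. sq k \<in> E}"
    proof -
      have "{k. sq k \<in> E} = sq -` E" by auto
      moreover have "inj sq" by (auto simp: inj_def sq_def)
      ultimately show ?thesis using finite_vimageI[OF finE] by simp
    qed
    ultimately have infK: "infinite K" by (simp add: Diff_infinite_finite)
    have neg: "\<exists>v. v \<noteq> sq k \<and> (\<forall>X\<in>CI. v \<notin> X \<longrightarrow> X \<noteq> sg (sq k) \<longrightarrow> R X (sg (sq k)))"
      if kK: "k \<in> K" for k
    proof -
      obtain T where T: "teaching_set (CI - {L'. R L' (sg (sq k))}) (sg (sq k)) T"
        "T = {} \<or> (\<exists>w b. T = {(w,b)})" using TS[OF sqC] by blast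
      have SR: "S \<noteq> sg (sq k)" and QR: "Q \<noteq> sg (sq k)" using sgS sgQ[of "sq k"] by (auto simp: sq_def)
      show ?thesis
      proof (cases "T = {}")
        case True
        then have "R S (sg (sq k))" "R Q (sg (sq k))"
          using below[OF T(1)] SC QC SR QR by (auto simp: consistent_def)
        thus ?thesis using ng kK K_def by auto
      next
        case False
        then obtain w b where wb: "T = {(w,b)}" using T(2) by auto
        have cw: "(w \<in> sg (sq k)) = b" using tsc[OF T(1)] wb by (simp add: consistent_def)
        show ?thesis
        proof (cases b)
          case True
          then have "w = sq k" using cw sg by auto
          then have "R S (sg (sq k))" "R Q (sg (sq k))"
            using below[OF T(1)] SC QC SR QR wb True sqQ S by (auto simp: consistent_def)
          thus ?thesis using ng kK K_def by auto
        next
          case False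
          then have "w \<noteq> sq k" using cw sg by auto
          moreover have "\<forall>X\<in>CI. w \<notin> X \<longrightarrow> X \<noteq> sg (sq k) \<longrightarrow> R X (sg (sq k))"
            using below[OF T(1)] wb False by (auto simp: consistent_def)
          ultimately show ?thesis by blast
        qed
      qed
    qed
    then have ex: "\<forall>k\<in>K. \<exists>v. v \<noteq> sq k \<and> (\<forall>X\<in>CI. v \<notin> X \<longrightarrow> X \<noteq> sg (sq k) \<longrightarrow> R X (sg (sq k)))"
      by blast
    obtain V where V0: "\<forall>k\<in>K. V k \<noteq> sq k \<and>
        (\<forall>X\<in>CI. V k \<notin> X \<longrightarrow> X \<noteq> sg (sq k) \<longrightarrow> R X (sg (sq k)))"
      using bchoice[OF ex] by blast
    have V: "V k \<noteq> sq k \<and> (\<forall>X\<in>CI. V k \<notin> X \<longrightarrow> X \<noteq> sg (sq k) \<longrightarrow> R X (sg (sq k)))"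
      if "k \<in> K" for k using V0 that by blast
    have sqinj: "sq a = sq b \<longleftrightarrow> a = b" for a b by (simp add: sq_def)
    have sgsq: "sg (sq a) = sg (sq b) \<longleftrightarrow> a = b" for a b using sg sqinj by auto
    have Rij: "R (sg (sq i)) (sg (sq j))" if "j \<in> K" "V j \<noteq> sq i" "i \<noteq> j" for i j
    proof -
      have "V j \<notin> sg (sq i)" using that(2) sg by simp
      moreover have "sg (sq i) \<noteq> sg (sq j)" using sgsq that(3) by simp
      ultimately show ?thesis using V[OF that(1)] sqC[of i] by blast
    qed
    obtain k1 where k1: "k1 \<in> K" using infinite_imp_nonempty[OF infK] by blast
    have i2: "infinite (K - {k1, hd (V k1)})" by (rule Diff_infinite_finite[OF _ infK]) simp
    from infinite_imp_nonempty[OF i2] obtain k2 where "k2 \<in> K - {k1, hd (V k1)}" by blast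
    then have k2: "k2 \<in> K" "k2 \<noteq> k1" "k2 \<noteq> hd (V k1)" by auto
    have i3: "infinite (K - {k1, k2, hd (V k1)})" by (rule Diff_infinite_finite[OF _ infK]) simp
    from infinite_imp_nonempty[OF i3] obtain k3 where "k3 \<in> K - {k1, k2, hd (V k1)}" by blast
    then have k3: "k3 \<in> K" "k3 \<noteq> k1" "k3 \<noteq> k2" "k3 \<noteq> hd (V k1)" by auto
    have v12: "V k1 \<noteq> sq k2" using k2(3) by (auto simp: sq_def)
    have v13: "V k1 \<noteq> sq k3" using k3(4) by (auto simp: sq_def)
    show False
    proof (cases "V k2 = sq k1")
      case False
      then have "R (sg (sq k1)) (sg (sq k2))" "R (sg (sq k2)) (sg (sq k1))"
        using Rij[OF k2(1) False] Rij[OF k1 v12] k2(2) by auto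
      thus False using cycle[OF po sqC sqC] by blast
    next
      case True note t2 = this
      show False
      proof (cases "V k3 = sq k1")
        case False
        then have "R (sg (sq k1)) (sg (sq k3))" "R (sg (sq k3)) (sg (sq k1))"
          using Rij[OF k3(1) False] Rij[OF k1 v13] k3(2) by auto
        thus False using cycle[OF po sqC sqC] by blast
      next
        case True
        have a: "V k3 \<noteq> sq k2" using True k2(2) sqinj by auto
        have b: "V k2 \<noteq> sq k3" using t2 k3(2) sqinj by auto
        have "R (sg (sq k2)) (sg (sq k3))" "R (sg (sq k3)) (sg (sq k2))"
          using Rij[OF k3(1) a] Rij[OF k2(1) b] k3(3) by auto
        thus False using cycle[OF po sqC sqC] by blast
      qed
    qed
  qed
  obtain T where T: "teaching_set (CI - {L'. R L' S}) S T" "T = {} \<or> (\<exists>w b. T = {(w,b)})"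
    using TS[OF SC] by blast
  show False
  proof (cases "T = {}")
    case True
    obtain k where k: "R S (sg (sq k))" using good[of "{}"] by auto
    have "R (sg (sq k)) S" using below[OF T(1) sqC] True sgS by (auto simp: consistent_def)
    thus False using cycle[OF po SC sqC] k by blast
  next
    case False
    then obtain w b where wb: "T = {(w,b)}" using T(2) by auto
    have b: b using tsc[OF T(1)] wb S by (simp add: consistent_def)
    show False
    proof (cases "w = []")
      case True
      have QS: "R Q S" using below[OF T(1) QC] wb b True nilQ SQ by (auto simp: consistent_def)
      obtain T2 where T2: "teaching_set (CI - {L'. R L' Q}) Q T2" "T2 = {} \<or> (\<exists>w b. T2 = {(w,b)})"
        using TS[OF QC] by blast
      show False
      proof (cases "T2 = {} \<or> (\<exists>s. T2 = {(s,True)})")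
        case True
        then have "R S Q" using below[OF T2(1) SC] S SQ by (auto simp: consistent_def)
        thus False using cycle[OF po SC QC] QS by blast
      next
        case False
        then obtain v where v: "T2 = {(v,False)}" using T2(2) by (metis (full_types))
        obtain k where k: "sq k \<notin> {v}" "R Q (sg (sq k))" using good[of "{v}"] by auto
        have "R (sg (sq k)) Q" using below[OF T2(1) sqC] v k sg sgQ[of "sq k"]
          by (auto simp: consistent_def sq_def)
        thus False using cycle[OF po QC sqC] k by blast
      qed
    next
      case False
      have wS: "R (sg w) S" using below[OF T(1) sgC[OF False]] wb b sg sgS by (auto simp: consistent_def)
      obtain T2 where T2: "teaching_set (CI - {L'. R L' (sg w)}) (sg w) T2" "T2 = {} \<or> (\<exists>w b. T2 = {(w,b)})"
        using TS[OF sgC[OF False]] by blast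
      show False
      proof (cases "T2 = {} \<or> (\<exists>s. T2 = {(s,True)})")
        case True
        then have "R S (sg w)" using below[OF T2(1) SC] S sgS tsc[OF T2(1)]
          by (auto simp: consistent_def)
        thus False using cycle[OF po SC sgC[OF False]] wS by blast
      next
        case c2: False
        then obtain v where v: "T2 = {(v,False)}" using T2(2) by (metis (full_types))
        obtain k where k: "sq k \<notin> {v, w}" "R S (sg (sq k))" using good[of "{v,w}"] by auto
        have "R (sg (sq k)) (sg w)" using below[OF T2(1) sqC] v k sg
          by (auto simp: consistent_def)
        then have "R (sg (sq k)) S" using wS po sqC SC sgC[OF False] unfolding strict_po_on_def by blast
        thus False using cycle[OF po SC sqC] k by blast
      qed
    qed
  qed
qed

lemma inf_part: "PBTD CI = 2"
  using upper_inf PBTD_ge[of CI 2] lower_inf_order by (auto intro: antisym)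



definition vc :: "nat \<Rightarrow> 'a pattern \<Rightarrow> nat" where
  "vc x p = length (filter (\<lambda>s. s = Var x) p)"
definition lcnt :: "'a pattern \<Rightarrow> nat" where
  "lcnt p = length (filter (\<lambda>s. case s of Let _ \<Rightarrow> True | Var _ \<Rightarrow> False) p)"
definition pvars :: "'a pattern \<Rightarrow> nat set" where
  "pvars p = {x. Var x \<in> set p}"

lemma finite_pvars: "finite (pvars p)"
  unfolding pvars_def
  by (rule finite_subset[of _ "(\<lambda>s. case s of Var x \<Rightarrow> x | Let _ \<Rightarrow> 0) ` set p"]) force+

lemma len_subst:
  assumes "finite V" "pvars p \<subseteq> V"
  shows "length (subst h p) = lcnt p + (\<Sum>x\<in>V. vc x p * length (h x))"
  using assms(2)
proof (induction p)
  case Nil thus ?case by (simp add: lcnt_def vc_def)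
next
  case (Cons s p)
  have IH: "length (subst h p) = lcnt p + (\<Sum>x\<in>V. vc x p * length (h x))"
    using Cons by (auto simp: pvars_def)
  show ?case
  proof (cases s)
    case (Var y)
    have yV: "y \<in> V" using Cons.prems Var by (auto simp: pvars_def)
    have vcs: "vc x (s # p) = (if x = y then 1 else 0) + vc x p" for x
      using Var by (auto simp: vc_def)
    have "(\<Sum>x\<in>V. vc x (s # p) * length (h x)) =
          (\<Sum>x\<in>V. (if x = y then length (h x) else 0) + vc x p * length (h x))"
      by (rule sum.cong) (simp_all add: vcs)
    also have "\<dots> = (\<Sum>x\<in>V. (if x = y then length (h x) else 0)) + (\<Sum>x\<in>V. vc x p * length (h x))"
      by (rule sum.distrib)
    also have "(\<Sum>x\<in>V. (if x = y then length (h x) else 0)) = length (h y)"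
      using assms(1) yV by simp
    finally show ?thesis using IH Var by (simp add: lcnt_def)
  next
    case (Let a)
    have vcs: "vc x (Let a # p) = vc x p" for x by (auto simp: vc_def)
    show ?thesis using IH Let by (simp add: vcs lcnt_def)
  qed
qed

lemma unit_list_eq: "length (xs :: unit list) = length ys \<Longrightarrow> xs = ys"
  by (simp add: list_eq_iff_nth_eq)

lemma unit_mem:
  "(w :: unit list) \<in> patlang p \<longleftrightarrow> (\<exists>l. length w = lcnt p + (\<Sum>x\<in>pvars p. vc x p * l x))"
proof
  assume "w \<in> patlang p"
  then obtain h where "w = subst h p" by (auto simp: patlang_def)
  thus "\<exists>l. length w = lcnt p + (\<Sum>x\<in>pvars p. vc x p * l x)"
    by (intro exI[of _ "\<lambda>x. length (h x)"]) (simp add: len_subst[OF finite_pvars order_refl])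
next
  assume "\<exists>l. length w = lcnt p + (\<Sum>x\<in>pvars p. vc x p * l x)"
  then obtain l where l: "length w = lcnt p + (\<Sum>x\<in>pvars p. vc x p * l x)" by blast
  define h where "h = (\<lambda>x. replicate (l x) ())"
  have "length (subst h p) = lcnt p + (\<Sum>x\<in>pvars p. vc x p * length (h x))"
    by (rule len_subst[OF finite_pvars order_refl])
  also have "\<dots> = length w" unfolding l h_def by simp
  finally have "length (subst h p) = length w" .
  then have "w = subst h p" by (simp add: unit_list_eq)
  thus "w \<in> patlang p" by (auto simp: patlang_def)
qed

lemma vc_pos: "x \<in> pvars p \<Longrightarrow> vc x p \<ge> 1"
  by (auto simp: vc_def pvars_def Suc_le_eq filter_empty_conv length_greater_0_conv[symmetric]
           simp del: length_greater_0_conv)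

definition mn :: "unit list set \<Rightarrow> nat" where
  "mn L = (LEAST n. replicate n () \<in> L)"

lemma mn_pat: "mn (patlang (p :: unit pattern)) = lcnt p"
  unfolding mn_def
proof (rule Least_equality)
  show "replicate (lcnt p) () \<in> patlang p" unfolding unit_mem by (auto intro: exI[of _ "\<lambda>_. 0"])
next
  fix n assume "replicate n () \<in> patlang p"
  thus "lcnt p \<le> n" unfolding unit_mem by auto
qed

abbreviation CU :: "nat \<Rightarrow> unit list set set" where
  "CU m \<equiv> lang_class (patterns_bounded_occ m :: unit pattern set)"

definition RU :: "unit list set \<Rightarrow> unit list set \<Rightarrow> bool" where
  "RU L' L \<longleftrightarrow> mn L' < mn L \<or> (mn L' = mn L \<and> L \<subset> L')"

lemma unary_upper: "PBTD (CU m) \<le> enat (m + 1)"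
proof (rule PBTD_le[where R = RU])
  show "strict_po_on (CU m) RU" unfolding strict_po_on_def RU_def by auto
next
  fix L assume "L \<in> CU m"
  then obtain p :: "unit pattern" where p: "p \<in> patterns_bounded_occ m" "L = patlang p"
    by (auto simp: lang_class_def)
  define c where "c = lcnt p"
  define V where "V = pvars p"
  define G where "G = (\<lambda>x. vc x p) ` V"
  define T where "T = insert (replicate c (), True) ((\<lambda>g. (replicate (c + g) (), True)) ` G)"
  have GS: "G \<subseteq> {1..m}"
    using p(1) vc_pos unfolding G_def V_def patterns_bounded_occ_def vc_def by fastforce
  then have cG: "card G \<le> m" using card_mono[OF finite_atLeastAtMost GS] by simp
  have finT: "finite T" unfolding T_def G_def V_def using finite_pvars by auto
  have cT: "card T \<le> m + 1"
  proof -
    have "card T \<le> Suc (card ((\<lambda>g. (replicate (c + g) (), True)) ` G))"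
      unfolding T_def by (rule card_insert_le_m1) (auto) 
    also have "\<dots> \<le> Suc (card G)" using card_image_le[of G] GS finite_subset by (simp add: finite_subset)
    finally show ?thesis using cG by simp
  qed
  have mnL: "mn L = c" using mn_pat p c_def by simp
  have ind: "replicate (c + vc x p) () \<in> L" if "x \<in> V" for x
  proof -
    have "(\<Sum>y\<in>V. vc y p * (if y = x then 1 else 0)) = vc x p"
      using that finite_pvars[of p] unfolding V_def by (simp add: if_distrib cong: if_cong)
    thus ?thesis unfolding p unit_mem c_def V_def by (auto intro!: exI[of _ "\<lambda>y. if y = x then 1 else 0"])
  qed
  have ts: "teaching_set (CU m - {L'. RU L' L}) L T"
    unfolding teaching_set_def
  proof (intro conjI ballI impI)
    have "replicate c () \<in> L" unfolding p unit_mem c_def by (auto intro: exI[of _ "\<lambda>_. 0"])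
    thus "consistent L T" using ind by (auto simp: T_def consistent_def G_def)
  next
    fix L' assume L': "L' \<in> CU m - {L'. RU L' L}" and cs: "consistent L' T"
    then obtain q :: "unit pattern" where q: "L' = patlang q" by (auto simp: lang_class_def)
    have r0: "replicate c () \<in> L'" using cs by (auto simp: T_def consistent_def)
    have rg: "replicate (c + vc x p) () \<in> L'" if "x \<in> V" for x
      using cs that by (auto simp: T_def consistent_def G_def)
    have "mn L' \<le> c" using r0 unfolding mn_def by (rule Least_le)
    moreover have "\<not> RU L' L" using L' by auto
    ultimately have mq: "lcnt q = c" and nsub: "\<not> L \<subset> L'" using mnL mn_pat[of q] q
      unfolding RU_def by auto
    have ex: "\<forall>x\<in>V. \<exists>l. c + vc x p = lcnt q + (\<Sum>z\<in>pvars q. vc z q * l z)"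
      using rg unfolding q unit_mem by simp
    obtain lx where lx: "\<forall>x\<in>V. c + vc x p = lcnt q + (\<Sum>z\<in>pvars q. vc z q * lx x z)"
      using bchoice[OF ex] by blast
    have lx': "(\<Sum>z\<in>pvars q. vc z q * lx x z) = vc x p" if "x \<in> V" for x
    proof -
      have "c + vc x p = lcnt q + (\<Sum>z\<in>pvars q. vc z q * lx x z)" using lx that by blast
      thus ?thesis using mq by linarith
    qed
    have "L \<subseteq> L'"
    proof
      fix w assume "w \<in> L"
      then obtain l where l: "length w = c + (\<Sum>x\<in>V. vc x p * l x)"
        unfolding p unit_mem c_def V_def by blast
      define l' where "l' = (\<lambda>z. \<Sum>x\<in>V. l x * lx x z)"
      have "(\<Sum>z\<in>pvars q. vc z q * l' z) = (\<Sum>z\<in>pvars q. \<Sum>x\<in>V. l x * (vc z q * lx x z))"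
        unfolding l'_def by (simp add: sum_distrib_left mult_ac)
      also have "\<dots> = (\<Sum>x\<in>V. \<Sum>z\<in>pvars q. l x * (vc z q * lx x z))" by (rule sum.swap)
      also have "\<dots> = (\<Sum>x\<in>V. l x * (\<Sum>z\<in>pvars q. vc z q * lx x z))" by (simp add: sum_distrib_left)
      also have "\<dots> = (\<Sum>x\<in>V. vc x p * l x)" using lx' by (simp add: mult.commute)
      finally have "length w = lcnt q + (\<Sum>z\<in>pvars q. vc z q * l' z)" using l mq by simp
      thus "w \<in> L'" unfolding q unit_mem by blast
    qed
    thus "L' = L" using nsub by auto
  qed
  have "pref_td (CU m) RU L \<le> enat (card T)" by (rule pref_td_le) (use ts finT in auto)
  thus "pref_td (CU m) RU L \<le> enat (m + 1)" using cT by (auto intro: order_trans)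
qed



lemma semi:
  fixes k :: nat and A :: "nat set"
  assumes k1: "k \<ge> 1" and A: "A \<subseteq> {k..<2*k}"
  shows "(\<exists>l. n = (\<Sum>g\<in>A \<union> {2*k..<4*k}. g * l g)) \<longleftrightarrow> (n = 0 \<or> n \<in> A \<or> 2*k \<le> n)"
proof -
  define G where "G = A \<union> {2*k..<4*k}"
  have finG: "finite G" unfolding G_def using A finite_subset by auto
  have Gk: "g \<ge> k" if "g \<in> G" for g using that A unfolding G_def by auto
  have "(\<exists>l. n = (\<Sum>g\<in>G. g * l g)) \<longleftrightarrow> (n = 0 \<or> n \<in> A \<or> 2*k \<le> n)"
  proof
    assume "\<exists>l. n = (\<Sum>g\<in>G. g * l g)"
    then obtain l where l: "n = (\<Sum>g\<in>G. g * l g)" by blast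
    define s where "s = (\<Sum>g\<in>G. l g)"
    have "k * s = (\<Sum>g\<in>G. k * l g)" unfolding s_def by (simp add: sum_distrib_left)
    also have "\<dots> \<le> (\<Sum>g\<in>G. g * l g)" by (rule sum_mono) (use Gk in auto)
    finally have ks: "k * s \<le> n" using l by simp
    show "n = 0 \<or> n \<in> A \<or> 2*k \<le> n"
    proof (cases "s = 0")
      case True
      then have "\<forall>g\<in>G. l g = 0" using finG unfolding s_def by simp
      then have "n = 0" using l by simp
      thus ?thesis by simp
    next
      case False
      show ?thesis
      proof (cases "s = 1")
        case True
        then have "sum l G = Suc 0" unfolding s_def by simp
        then obtain g0 where g0: "g0 \<in> G" "l g0 = Suc 0" "\<forall>b\<in>G. g0 \<noteq> b \<longrightarrow> l b = 0"
          using sum_eq_Suc0_iff[OF finG] by blast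
        have "n = (\<Sum>g\<in>G. if g = g0 then g0 else 0)" unfolding l
          by (rule sum.cong) (use g0 in auto)
        also have "\<dots> = g0" using finG g0(1) by simp
        finally show ?thesis using g0(1) unfolding G_def by auto
      next
        case False
        then have "s \<ge> 2" using \<open>s \<noteq> 0\<close> by simp
        then have "k * 2 \<le> k * s" by (rule mult_le_mono2)
        thus ?thesis using ks by linarith
      qed
    qed
  next
    assume "n = 0 \<or> n \<in> A \<or> 2*k \<le> n"
    moreover
    { assume "n = 0" then have "\<exists>l. n = (\<Sum>g\<in>G. g * l g)" by (intro exI[of _ "\<lambda>_. 0"]) simp }
    moreover
    { assume nA: "n \<in> A"
      have "(\<Sum>g\<in>G. g * (if g = n then 1 else 0)) = (\<Sum>g\<in>G. if g = n then n else 0)"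
        by (rule sum.cong) auto
      also have "\<dots> = n" using finG nA unfolding G_def by simp
      finally have "\<exists>l. n = (\<Sum>g\<in>G. g * l g)" by (intro exI[of _ "\<lambda>g. if g = n then 1 else 0"]) simp }
    moreover
    { assume n2: "2*k \<le> n"
      define q where "q = n div (2*k)"
      define r where "r = n mod (2*k)"
      have q1: "q \<ge> 1" unfolding q_def using n2 k1 by (simp add: div_le_mono[of "2*k" n "2*k", simplified] Suc_le_eq div_greater_zero_iff)
      have r2: "r < 2*k" unfolding r_def using k1 by simp
      have nqr: "n = 2*k*q + r" unfolding q_def r_def by simp
      define l where "l = (\<lambda>g. (if g = 2*k then q - 1 else 0) + (if g = 2*k + r then 1 else (0::nat)))"
      have in1: "2*k \<in> G" and in2: "2*k + r \<in> G" unfolding G_def using k1 r2 by auto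
      have "(\<Sum>g\<in>G. g * l g) = (\<Sum>g\<in>G. (if g = 2*k then 2*k*(q-1) else 0) + (if g = 2*k + r then 2*k+r else 0))"
        by (rule sum.cong) (auto simp: l_def)
      also have "\<dots> = (\<Sum>g\<in>G. (if g = 2*k then 2*k*(q-1) else 0)) + (\<Sum>g\<in>G. (if g = 2*k + r then 2*k+r else 0))"
        by (rule sum.distrib)
      also have "\<dots> = 2*k*(q-1) + (2*k + r)" using finG in1 in2 by simp
      also have "\<dots> = n" using q1 nqr by (cases q) (auto simp: algebra_simps)
      finally have "\<exists>l. n = (\<Sum>g\<in>G. g * l g)" by metis }
    ultimately show "\<exists>l. n = (\<Sum>g\<in>G. g * l g)" by blast
  qed
  thus ?thesis unfolding G_def .
qed

definition patG :: "nat set \<Rightarrow> unit pattern" where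
  "patG G = concat (map (\<lambda>g. replicate g (Var g)) (sorted_list_of_set G))"

lemma vc_cat: "distinct gs \<Longrightarrow> vc x (concat (map (\<lambda>g. replicate g (Var g)) gs)) = (if x \<in> set gs then x else 0)"
  by (induction gs) (auto simp: vc_def filter_replicate)

lemma lcnt_cat: "lcnt (concat (map (\<lambda>g. replicate g (Var g)) gs)) = 0"
  by (induction gs) (auto simp: lcnt_def filter_replicate)

lemma pvars_cat: "pvars (concat (map (\<lambda>g. replicate g (Var g)) gs)) = {g \<in> set gs. 0 < g}"
  by (auto simp: pvars_def)

lemma patG_mem:
  assumes "finite G" "0 \<notin> G"
  shows "(w :: unit list) \<in> patlang (patG G) \<longleftrightarrow> (\<exists>l. length w = (\<Sum>g\<in>G. g * l g))"
proof -
  have "\<forall>g\<in>G. 0 < g" using assms(2) by (metis neq0_conv)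
  then have pv: "pvars (patG G) = G" using assms unfolding patG_def pvars_cat by auto
  have "(\<Sum>x\<in>pvars (patG G). vc x (patG G) * l x) = (\<Sum>g\<in>G. g * l g)" for l
    unfolding pv by (rule sum.cong) (use assms in \<open>auto simp: patG_def vc_cat\<close>)
  thus ?thesis unfolding unit_mem by (simp add: patG_def lcnt_cat)
qed

lemma patG_occ:
  assumes "finite G" "G \<noteq> {}" "\<forall>g\<in>G. 0 < g \<and> g \<le> m"
  shows "patG G \<in> patterns_bounded_occ m"
proof -
  obtain g where g: "g \<in> G" using assms(2) by blast
  have "Var g \<in> set (patG G)" using g assms by (auto simp: patG_def)
  then have "patG G \<noteq> []" by auto
  moreover have "vc x (patG G) \<le> m" for x using assms unfolding patG_def by (auto simp: vc_cat)
  ultimately show ?thesis unfolding patterns_bounded_occ_def vc_def by auto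
qed

lemma unary_lower2:
  assumes k1: "k \<ge> 1" and km: "4*k \<le> m + 1" and po: "strict_po_on (CU m) R"
  shows "enat k \<le> PBTD_order (CU m) R"
proof -
  define Wd where "Wd = {k..<2*k}"
  define LA where "LA = (\<lambda>A. patlang (patG (A \<union> {2*k..<4*k})) :: unit list set)"
  have memLA: "w \<in> LA A \<longleftrightarrow> (length w = 0 \<or> length w \<in> A \<or> 2*k \<le> length w)" if "A \<subseteq> Wd" for A w
  proof -
    have "finite (A \<union> {2*k..<4*k})" using that finite_subset unfolding Wd_def by auto
    moreover have "0 \<notin> A \<union> {2*k..<4*k}" using that k1 unfolding Wd_def by auto
    ultimately have "w \<in> LA A \<longleftrightarrow> (\<exists>l. length w = (\<Sum>g\<in>A \<union> {2*k..<4*k}. g * l g))"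
      unfolding LA_def by (rule patG_mem)
    also have "\<dots> \<longleftrightarrow> (length w = 0 \<or> length w \<in> A \<or> 2*k \<le> length w)"
      by (rule semi[OF k1]) (use that in \<open>simp add: Wd_def\<close>)
    finally show ?thesis .
  qed
  have inC: "LA A \<in> CU m" if "A \<subseteq> Wd" for A
  proof -
    have "patG (A \<union> {2*k..<4*k}) \<in> patterns_bounded_occ m"
      by (rule patG_occ) (use that k1 km finite_subset in \<open>auto simp: Wd_def\<close>)
    thus ?thesis unfolding LA_def lang_class_def by blast
  qed
  define F where "F = LA ` Pow Wd"
  show ?thesis
  proof (rule lower_family[OF po])
    show "F \<subseteq> CU m" unfolding F_def using inC by auto
    show "finite F" "F \<noteq> {}" unfolding F_def Wd_def by auto
  next
    fix L assume "L \<in> F"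
    then obtain A where A: "A \<subseteq> Wd" "L = LA A" unfolding F_def by auto
    define W where "W = (\<lambda>x. replicate x ()) ` Wd"
    have "card W = k" unfolding W_def Wd_def by (subst card_image) (auto simp: inj_on_def)
    moreover have "finite W" unfolding W_def Wd_def by auto
    moreover have "\<forall>w\<in>W. \<exists>L'\<in>F. L' \<noteq> L \<and> (\<forall>v. v \<noteq> w \<longrightarrow> (v \<in> L') = (v \<in> L))"
    proof
      fix w assume "w \<in> W"
      then obtain x where x: "x \<in> Wd" "w = replicate x ()" unfolding W_def by auto
      define A' where "A' = (if x \<in> A then A - {x} else insert x A)"
      have A': "A' \<subseteq> Wd" using A x unfolding A'_def by auto
      have x0: "x \<noteq> 0" "\<not> 2*k \<le> x" using x k1 unfolding Wd_def by auto
      have "(w \<in> LA A') \<noteq> (w \<in> LA A)" using memLA[OF A'] memLA[OF A(1)] x x0 unfolding A'_def by auto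
      then have "LA A' \<noteq> L" using A by auto
      moreover have "(v \<in> LA A') = (v \<in> L)" if "v \<noteq> w" for v
      proof -
        have "length v \<noteq> x" using that x unit_list_eq by (metis length_replicate)
        thus ?thesis using memLA[OF A'] memLA[OF A(1)] A unfolding A'_def by auto
      qed
      ultimately show "\<exists>L'\<in>F. L' \<noteq> L \<and> (\<forall>v. v \<noteq> w \<longrightarrow> (v \<in> L') = (v \<in> L))"
        using A' unfolding F_def by blast
    qed
    ultimately show "\<exists>W. finite W \<and> card W \<ge> k \<and>
          (\<forall>w\<in>W. \<exists>L'\<in>F. L' \<noteq> L \<and> (\<forall>v. v \<noteq> w \<longrightarrow> (v \<in> L') = (v \<in> L)))" by auto
  qed
qed

lemma unary_lower1:
  assumes m1: "m \<ge> 1" and po: "strict_po_on (CU m) R"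
  shows "enat 1 \<le> PBTD_order (CU m) R"
proof -
  define L1 where "L1 = (patlang [Var 0] :: unit list set)"
  define L2 where "L2 = (patlang [Let (), Var 0] :: unit list set)"
  have L1: "L1 = UNIV" unfolding L1_def by (rule lang_var)
  have L2: "w \<in> L2 \<longleftrightarrow> w \<noteq> []" for w
  proof -
    have pv: "pvars [Let (), Var 0] = {0}" by (auto simp: pvars_def)
    show ?thesis unfolding L2_def unit_mem pv
      by (auto simp: vc_def lcnt_def intro: exI[of _ "\<lambda>_. length w - 1"])
  qed
  have C1: "L1 \<in> CU m" and C2: "L2 \<in> CU m"
    unfolding L1_def L2_def lang_class_def patterns_bounded_occ_def using m1 by (auto intro!: imageI)
  show ?thesis
  proof (rule lower_family[OF po, of "{L1, L2}"])
    show "{L1, L2} \<subseteq> CU m" using C1 C2 by auto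
  next
    fix L assume L: "L \<in> {L1, L2}"
    have "\<forall>w\<in>{[]}. \<exists>L'\<in>{L1, L2}. L' \<noteq> L \<and> (\<forall>v. v \<noteq> w \<longrightarrow> (v \<in> L') = (v \<in> L))"
      using L L1 L2 by auto
    thus "\<exists>W. finite W \<and> card W \<ge> 1 \<and>
          (\<forall>w\<in>W. \<exists>L'\<in>{L1, L2}. L' \<noteq> L \<and> (\<forall>v. v \<noteq> w \<longrightarrow> (v \<in> L') = (v \<in> L)))"
      by (intro exI[of _ "{[]}"]) auto
  qed auto
qed

lemma unary_part:
  assumes m1: "m \<ge> 1"
  shows "\<exists>K::nat. PBTD (CU m) = enat K \<and> 1/8 * real m \<le> real K \<and> real K \<le> 2 * real m"
proof -
  have up: "PBTD (CU m) \<le> enat (m+1)" by (rule unary_upper)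
  then obtain K where K: "PBTD (CU m) = enat K" by (cases "PBTD (CU m)") auto
  have "enat 1 \<le> PBTD (CU m)" by (rule PBTD_ge) (rule unary_lower1[OF m1])
  then have K1: "1 \<le> K" using K by simp
  have K2: "(m+1) div 4 \<le> K" if "(m+1) div 4 \<ge> 1"
  proof -
    have "enat ((m+1) div 4) \<le> PBTD (CU m)"
      by (rule PBTD_ge) (rule unary_lower2[OF that], simp_all)
    thus ?thesis using K by simp
  qed
  have Ku: "K \<le> m + 1" using up K by simp
  have "m \<le> 8 * K"
  proof (cases "m \<le> 7")
    case True thus ?thesis using K1 by linarith
  next
    case False
    then have "(m+1) div 4 \<ge> 1" by simp
    then have "(m+1) div 4 \<le> K" by (rule K2)
    moreover have "m + 1 \<le> 4 * ((m+1) div 4) + 3" by simp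
    ultimately show ?thesis using False by linarith
  qed
  then have "1/8 * real m \<le> real K" by simp
  moreover have "real K \<le> 2 * real m" using Ku m1 by simp
  ultimately show ?thesis using K by blast
qed


theorem mainTheorem14:
  shows "PBTD (lang_class (all_patterns :: nat pattern set)) = 2 \<and>
    (\<exists>c1 c2 :: real. c1 > 0 \<and> c2 > 0 \<and>
      (\<forall>m::nat. m \<ge> 1 \<longrightarrow>
         (\<exists>k::nat. PBTD (lang_class (patterns_bounded_occ m :: unit pattern set)) = enat k \<and>
            c1 * real m \<le> real k \<and> real k \<le> c2 * real m)))"
proof (intro conjI)
  show "PBTD (lang_class (all_patterns :: nat pattern set)) = 2" by (rule inf_part)
  show "\<exists>c1 c2 :: real. c1 > 0 \<and> c2 > 0 \<and>
      (\<forall>m::nat. m \<ge> 1 \<longrightarrow>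
         (\<exists>k::nat. PBTD (lang_class (patterns_bounded_occ m :: unit pattern set)) = enat k \<and>
            c1 * real m \<le> real k \<and> real k \<le> c2 * real m))"
    by (rule exI[of _ "1/8"], rule exI[of _ 2]) (use unary_part in auto)
qed

end
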